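(* Let $\{(X_i,Y_i)\}_{i=1}^n$ be i.i.d. from a distribution $P$ and let the test point $(X_{n+1},Y_{n+1})$ be drawn from a distribution $Q$ independently of the labeled data, where $\mathrm{d}Q/\mathrm{d}P(x,y) = w(x)$ for a known weight function $w\colon \mathcal{X}\to \mathbb{R}^+$. Let $f$ be a model and $s\colon\mathcal{X}\to\mathbb{R}$ a score function, both fixed (trained independently of these data), and let $L_i = \mathcal{L}(f,X_i,Y_i)\in[0,1]$ for a known risk mapping $\mathcal{L}$, for $i\in[n+1]$. Write $w_i = w(X_i)$ for $i\in[n+1]$ and $\mathcal{M} = \{s(X_i)\}_{i=1}^{n+1}$. For $\ell\in[0,1]$ and $t\in\mathbb{R}$ define $$\mathrm{F}(t;\ell) = \frac{\sum_{i=1}^n w_i L_i \mathbf{1}\{s(X_i)\le t\} + w_{n+1}\,\ell\, \mathbf{1}\{s(X_{n+1})\le t\}}{\sum_{i=1}^{n+1} w_i},\qquad t_\gamma(\ell) = \max\{t\in\mathcal{M}\colon \mathrm{F}(t;\ell)\le\gamma\},$$ with $\max\emptyset = -\infty$, and define the weighted e-value $$E_{\gamma,n+1} = \inf_{\ell\in[0,1]} \left\{ \frac{\mathbf{1}\{s(X_{n+1})\le t_\gamma(\ell)\}\cdot \sum_{i=1}^{n+1} w_i}{\sum_{i=1}^n w_i L_i \mathbf{1}\{s(X_i)\le t_\gamma(\ell)\} + w_{n+1}\,\ell\,\mathbf{1}\{s(X_{n+1})\le t_\gamma(\ell)\}}\right\},$$ with $E_{\gamma,n+1}=0$ when $\inf_{\ell\in[0,1]}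 t_\gamma(\ell) = -\infty$. Then for any fixed constant $\gamma\in(0,1)$, it holds that $\mathbb{E}_Q[L_{n+1}E_{\gamma,n+1}]\le 1$.
   Context: Covariate-shift setting: calibration data i.i.d. from $P$, test data from $Q$ with $\mathrm{d}Q/\mathrm{d}P(x,y)=w(x)$ known. The weighted e-value is used for marginal deployment risk control via the decision $\hat\psi_{n+1}=\mathbf{1}\{E_{\gamma,n+1}\ge 1/\alpha\}$, so that the validity $\mathbb{E}_Q[L_{n+1}E_{\gamma,n+1}]\le 1$ yields $\mathbb{E}_Q[L_{n+1}\hat\psi_{n+1}]\le\alpha$. *)

theory Defs
  imports "HOL-Probability.Probability"
begin

text \<open>Data are indexed 1..n (calibration) and n+1 (test).
  ws i = w(X_i), Ls i = L_i, Ss i = s(X_i).\<close>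

definition wF :: "nat \<Rightarrow> (nat \<Rightarrow> real) \<Rightarrow> (nat \<Rightarrow> real) \<Rightarrow> (nat \<Rightarrow> real) \<Rightarrow> real \<Rightarrow> real \<Rightarrow> real" where
  "wF n ws Ls Ss t l =
     ((\<Sum>i=1..n. ws i * Ls i * (if Ss i \<le> t then 1 else 0))
       + ws (n+1) * l * (if Ss (n+1) \<le> t then 1 else 0))
     / (\<Sum>i=1..n+1. ws i)"

definition t_gamma :: "nat \<Rightarrow> (nat \<Rightarrow> real) \<Rightarrow> (nat \<Rightarrow> real) \<Rightarrow> (nat \<Rightarrow> real) \<Rightarrow> real \<Rightarrow> real \<Rightarrow> ereal" where
  "t_gamma n ws Ls Ss \<gamma> l =
     Sup (ereal ` {t \<in> Ss ` {1..n+1}. wF n ws Ls Ss t l \<le> \<gamma>})"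

text \<open>The ratio inside the infimum (extended reals: positive / 0 = infinity, 0 / 0 = 0).\<close>
definition e_ratio :: "nat \<Rightarrow> (nat \<Rightarrow> real) \<Rightarrow> (nat \<Rightarrow> real) \<Rightarrow> (nat \<Rightarrow> real) \<Rightarrow> real \<Rightarrow> real \<Rightarrow> ereal" where
  "e_ratio n ws Ls Ss \<gamma> l =
     (let T = t_gamma n ws Ls Ss \<gamma> l;
          ind = (\<lambda>i. if ereal (Ss i) \<le> T then (1::real) else 0)
      in ereal (ind (n+1) * (\<Sum>i=1..n+1. ws i)) /
         ereal ((\<Sum>i=1..n. ws i * Ls i * ind i) + ws (n+1) * l * ind (n+1)))"

definition weighted_evalue :: "nat \<Rightarrow> (nat \<Rightarrow> real) \<Rightarrow> (nat \<Rightarrow> real) \<Rightarrow> (nat \<Rightarrow> real) \<Rightarrow> real \<Rightarrow> ereal" where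
  "weighted_evalue n ws Ls Ss \<gamma> =
     (if (INF l\<in>{0..1}. t_gamma n ws Ls Ss \<gamma> l) = -\<infinity> then 0
      else (INF l\<in>{0..1}. e_ratio n ws Ls Ss \<gamma> l))"

definition evalue_data ::
  "('x \<Rightarrow> real) \<Rightarrow> ('x \<Rightarrow> real) \<Rightarrow> ('x \<Rightarrow> 'y \<Rightarrow> real) \<Rightarrow> nat \<Rightarrow> real \<Rightarrow> (nat \<Rightarrow> 'x \<times> 'y) \<Rightarrow> ereal" where
  "evalue_data w s Lf n \<gamma> z =
     weighted_evalue n (\<lambda>i. w (fst (z i))) (\<lambda>i. Lf (fst (z i)) (snd (z i))) (\<lambda>i. s (fst (z i))) \<gamma>"

end

theory Submission
  imports Defs
begin


definition Wt :: "('x \<Rightarrow> real) \<Rightarrow> nat \<Rightarrow> (nat \<Rightarrow> 'x \<times> 'y) \<Rightarrow> real" where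
  "Wt w n z = (\<Sum>i\<in>{1..Suc n}. w (fst (z i)))"

definition Fv :: "('x \<Rightarrow> real) \<Rightarrow> ('x \<Rightarrow> real) \<Rightarrow> ('x \<Rightarrow> 'y \<Rightarrow> real) \<Rightarrow> nat \<Rightarrow> (nat \<Rightarrow> 'x \<times> 'y) \<Rightarrow> real \<Rightarrow> real" where
  "Fv w s Lf n z t = (\<Sum>i\<in>{1..Suc n}. w (fst (z i)) * Lf (fst (z i)) (snd (z i)) * (if s (fst (z i)) \<le> t then 1 else 0)) / Wt w n z"

definition good :: "('x \<Rightarrow> real) \<Rightarrow> ('x \<Rightarrow> real) \<Rightarrow> ('x \<Rightarrow> 'y \<Rightarrow> real) \<Rightarrow> nat \<Rightarrow> real \<Rightarrow> (nat \<Rightarrow> 'x \<times> 'y) \<Rightarrow> nat \<Rightarrow> bool" where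
  "good w s Lf n \<gamma> z i = (\<exists>j\<in>{1..Suc n}. Fv w s Lf n z (s (fst (z j))) \<le> \<gamma> \<and> s (fst (z i)) \<le> s (fst (z j)))"

definition ind :: "('x \<Rightarrow> real) \<Rightarrow> ('x \<Rightarrow> real) \<Rightarrow> ('x \<Rightarrow> 'y \<Rightarrow> real) \<Rightarrow> nat \<Rightarrow> real \<Rightarrow> (nat \<Rightarrow> 'x \<times> 'y) \<Rightarrow> nat \<Rightarrow> real" where
  "ind w s Lf n \<gamma> z i = (if good w s Lf n \<gamma> z i then 1 else 0)"

definition Dv :: "('x \<Rightarrow> real) \<Rightarrow> ('x \<Rightarrow> real) \<Rightarrow> ('x \<Rightarrow> 'y \<Rightarrow> real) \<Rightarrow> nat \<Rightarrow> real \<Rightarrow> (nat \<Rightarrow> 'x \<times> 'y) \<Rightarrow> real" where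
  "Dv w s Lf n \<gamma> z = (\<Sum>i\<in>{1..Suc n}. w (fst (z i)) * Lf (fst (z i)) (snd (z i)) * ind w s Lf n \<gamma> z i)"

definition hv :: "('x \<Rightarrow> real) \<Rightarrow> ('x \<Rightarrow> real) \<Rightarrow> ('x \<Rightarrow> 'y \<Rightarrow> real) \<Rightarrow> nat \<Rightarrow> real \<Rightarrow> (nat \<Rightarrow> 'x \<times> 'y) \<Rightarrow> nat \<Rightarrow> real" where
  "hv w s Lf n \<gamma> z j = w (fst (z j)) * Lf (fst (z j)) (snd (z j)) * ind w s Lf n \<gamma> z j * Wt w n z / Dv w s Lf n \<gamma> z"

lemma wF_eq:
  "wF n (\<lambda>i. w (fst (z i))) (\<lambda>i. Lf (fst (z i)) (snd (z i))) (\<lambda>i. s (fst (z i))) t (Lf (fst (z (n+1))) (snd (z (n+1))))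
   = Fv w s Lf n z t"
  unfolding wF_def Fv_def Wt_def by (simp add: sum.cl_ivl_Suc)

lemma tg_iff:
  "(ereal (s (fst (z i))) \<le> t_gamma n (\<lambda>i. w (fst (z i))) (\<lambda>i. Lf (fst (z i)) (snd (z i))) (\<lambda>i. s (fst (z i))) \<gamma> (Lf (fst (z (n+1))) (snd (z (n+1)))))
   = good w s Lf n \<gamma> z i"
proof -
  define A where "A = {t \<in> (\<lambda>i. s (fst (z i))) ` {1..n+1}. Fv w s Lf n z t \<le> \<gamma>}"
  have tg: "t_gamma n (\<lambda>i. w (fst (z i))) (\<lambda>i. Lf (fst (z i)) (snd (z i))) (\<lambda>i. s (fst (z i))) \<gamma> (Lf (fst (z (n+1))) (snd (z (n+1)))) = Sup (ereal ` A)"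
    unfolding t_gamma_def A_def wF_eq ..
  have fin: "finite (ereal ` A)" unfolding A_def by auto
  have "(ereal (s (fst (z i))) \<le> Sup (ereal ` A)) = (\<exists>a\<in>A. s (fst (z i)) \<le> a)"
  proof
    assume h: "ereal (s (fst (z i))) \<le> Sup (ereal ` A)"
    show "\<exists>a\<in>A. s (fst (z i)) \<le> a"
    proof (rule ccontr)
      assume "\<not> ?thesis"
      hence all: "\<forall>a\<in>A. a < s (fst (z i))" by auto
      show False
      proof (cases "A = {}")
        case True then show False using h by (simp add: bot_ereal_def)
      next
        case False
        then have "Sup (ereal ` A) < ereal (s (fst (z i)))"
          using fin all by (subst finite_Sup_less_iff) auto
        then show False using h by simp
      qed
    qed
  next
    assume "\<exists>a\<in>A. s (fst (z i)) \<le> a"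
    then obtain a where "a \<in> A" "s (fst (z i)) \<le> a" by blast
    then show "ereal (s (fst (z i))) \<le> Sup (ereal ` A)"
      by (meson Sup_upper ereal_less_eq(3) image_eqI order_trans)
  qed
  also have "\<dots> = good w s Lf n \<gamma> z i"
    unfolding good_def A_def by auto
  finally show ?thesis using tg by simp
qed

lemma pointwise_bound:
  assumes w0: "\<And>x. 0 \<le> w x" and L01: "\<And>x y. 0 \<le> Lf x y \<and> Lf x y \<le> 1"
  shows "ennreal (Lf (fst (z (n+1))) (snd (z (n+1)))) * e2ennreal (evalue_data w s Lf n \<gamma> z)
    \<le> ennreal (Lf (fst (z (n+1))) (snd (z (n+1)))) *
       (if w (fst (z (n+1))) = 0 then \<infinity> else ennreal (ind w s Lf n \<gamma> z (n+1) * Wt w n z / Dv w s Lf n \<gamma> z))"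
proof -
  define L where "L = Lf (fst (z (n+1))) (snd (z (n+1)))"
  have L01': "0 \<le> L" "L \<le> 1" using L01 unfolding L_def by auto
  show ?thesis
  proof (cases "L = 0 \<or> w (fst (z (n+1))) = 0")
    case True
    then show ?thesis
      using True unfolding L_def by (auto simp: ennreal_mult_top)
  next
    case False
    then have Lp: "L > 0" and wp: "w (fst (z (n+1))) > 0" using L01' w0[of "fst (z (n+1))"] by auto
    let ?ws = "\<lambda>i. w (fst (z i))" and ?Ls = "\<lambda>i. Lf (fst (z i)) (snd (z i))" and ?Ss = "\<lambda>i. s (fst (z i))"
    have er: "e_ratio n ?ws ?Ls ?Ss \<gamma> L = ereal (ind w s Lf n \<gamma> z (n+1) * Wt w n z) / ereal (Dv w s Lf n \<gamma> z)"
      unfolding e_ratio_def Let_def L_def tg_iff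
      by (simp add: ind_def[symmetric] Wt_def Dv_def sum.cl_ivl_Suc)
    have "evalue_data w s Lf n \<gamma> z \<le> e_ratio n ?ws ?Ls ?Ss \<gamma> L \<or> evalue_data w s Lf n \<gamma> z = 0"
      unfolding evalue_data_def weighted_evalue_def
      using L01' by (auto intro: INF_lower)
    then have "e2ennreal (evalue_data w s Lf n \<gamma> z) \<le> e2ennreal (e_ratio n ?ws ?Ls ?Ss \<gamma> L)"
      by (metis e2ennreal_mono e2ennreal_neg order_refl zero_le)
    also have "\<dots> \<le> ennreal (ind w s Lf n \<gamma> z (n+1) * Wt w n z / Dv w s Lf n \<gamma> z)"
    proof (cases "Dv w s Lf n \<gamma> z = 0")
      case True
      have "Dv w s Lf n \<gamma> z \<ge> w (fst (z (n+1))) * L * ind w s Lf n \<gamma> z (n+1)"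
        unfolding Dv_def L_def
        by (rule member_le_sum) (auto simp: ind_def intro!: mult_nonneg_nonneg w0 L01[THEN conjunct1])
      moreover have "0 < w (fst (z (n+1))) * L" using wp Lp by simp
      ultimately have "ind w s Lf n \<gamma> z (n+1) = 0" using True
        unfolding ind_def by (cases "good w s Lf n \<gamma> z (n + 1)") auto
      then show ?thesis unfolding er by (simp add: True)
    next
      case False
      then show ?thesis unfolding er by simp
    qed
    finally show ?thesis using wp unfolding L_def by (auto intro: mult_left_mono)
  qed
qed



lemma indicator_PiE_prod:
  assumes "z \<in> extensional I" "finite I"
  shows "indicator (PiE I A) z = (\<Prod>i\<in>I. indicator (A i) (z i) :: ennreal)"
proof (cases "z \<in> PiE I A")
  case True then show ?thesis by (auto simp: indicator_def PiE_def intro!: prod.neutral)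
next
  case False
  then obtain i where i: "i \<in> I" "z i \<notin> A i" using assms(1) by (auto simp: PiE_def Pi_def)
  have "(\<Prod>i\<in>I. indicator (A i) (z i) :: ennreal) = 0"
    using assms(2) i by (intro prod_zero) (auto intro!: bexI[of _ i])
  then show ?thesis using False by simp
qed

lemma PiM_last_density:
  assumes P: "prob_space P" and Q: "prob_space Q" and g: "g \<in> borel_measurable P"
    and Qd: "Q = density P g"
  shows "PiM {1..Suc n} (\<lambda>i. if i = Suc n then Q else P) = density (PiM {1..Suc n} (\<lambda>_. P)) (\<lambda>z. g (z (Suc n)))"
proof -
  let ?M = "\<lambda>i. if i = Suc n then Q else P"
  let ?I = "{1..Suc n}"
  have sQ: "sets Q = sets P" using Qd by simp
  have spQ: "space Q = space P" using Qd by simp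
  interpret PM: product_sigma_finite ?M
    unfolding product_sigma_finite_def
    using P Q by (auto intro: prob_space_imp_sigma_finite)
  interpret PP: product_sigma_finite "\<lambda>_. P"
    unfolding product_sigma_finite_def
    using P by (auto intro: prob_space_imp_sigma_finite)
  have gm: "(\<lambda>z. g (z (Suc n))) \<in> borel_measurable (PiM ?I (\<lambda>_. P))"
    using g by measurable
  have sets_eq: "sets (PiM ?I (\<lambda>_. P)) = sets (PiM ?I ?M)"
    by (rule sets_PiM_cong) (auto simp: sQ)
  show ?thesis
  proof (rule PM.PiM_eqI[symmetric])
    show "finite ?I" by simp
    show "sets (density (PiM ?I (\<lambda>_. P)) (\<lambda>z. g (z (Suc n)))) = sets (PiM ?I ?M)"
      using sets_eq by simp
    fix A assume A: "\<And>i. i \<in> ?I \<Longrightarrow> A i \<in> sets (?M i)"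
    then have AP: "\<And>i. i \<in> ?I \<Longrightarrow> A i \<in> sets P" using sQ by (metis (full_types))
    have PiEs: "PiE ?I A \<in> sets (PiM ?I (\<lambda>_. P))"
      using AP by (auto intro!: sets_PiM_I_finite)
    define f where "f i y = (if i = Suc n then g y else 1) * indicator (A i) y" for i y
    have "emeasure (density (PiM ?I (\<lambda>_. P)) (\<lambda>z. g (z (Suc n)))) (PiE ?I A)
        = (\<integral>\<^sup>+ z. g (z (Suc n)) * indicator (PiE ?I A) z \<partial>PiM ?I (\<lambda>_. P))"
      using gm PiEs by (rule emeasure_density)
    also have "\<dots> = (\<integral>\<^sup>+ z. (\<Prod>i\<in>?I. f i (z i)) \<partial>PiM ?I (\<lambda>_. P))"
    proof (rule nn_integral_cong)
      fix z assume "z \<in> space (PiM ?I (\<lambda>_. P))"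
      then have ze: "z \<in> extensional ?I" by (auto simp: space_PiM PiE_def)
      have "(\<Prod>i\<in>?I. f i (z i)) = (\<Prod>i\<in>?I. (if i = Suc n then g (z i) else 1)) * (\<Prod>i\<in>?I. indicator (A i) (z i))"
        unfolding f_def prod.distrib by simp
      also have "(\<Prod>i\<in>?I. (if i = Suc n then g (z i) else 1)) = g (z (Suc n))"
        by (subst prod.delta) auto
      finally show "g (z (Suc n)) * indicator (PiE ?I A) z = (\<Prod>i\<in>?I. f i (z i))"
        using indicator_PiE_prod[OF ze, of A] by simp
    qed
    also have "\<dots> = (\<Prod>i\<in>?I. integral\<^sup>N P (f i))"
      using AP g by (intro PP.product_nn_integral_prod) (auto simp: f_def)
    also have "\<dots> = (\<Prod>i\<in>?I. emeasure (?M i) (A i))"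
    proof (rule prod.cong)
      fix i assume i: "i \<in> ?I"
      show "integral\<^sup>N P (f i) = emeasure (?M i) (A i)"
      proof (cases "i = Suc n")
        case True
        then show ?thesis using AP[OF i] g unfolding f_def Qd
          by (simp add: emeasure_density)
      next
        case False
        then show ?thesis using AP[OF i] unfolding f_def by simp
      qed
    qed simp
    finally show "emeasure (density (PiM ?I (\<lambda>_. P)) (\<lambda>z. g (z (Suc n)))) (PiE ?I A) = (\<Prod>i\<in>?I. emeasure (?M i) (A i))" .
  qed
qed



lemma hv_meas:
  assumes [measurable]: "(\<lambda>z. w (fst z)) \<in> borel_measurable P"
    "(\<lambda>z. s (fst z)) \<in> borel_measurable P"
    "(\<lambda>z. Lf (fst z) (snd z)) \<in> borel_measurable P"
  and j: "j \<in> {1..Suc n}"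
  shows "(\<lambda>z. hv w s Lf n \<gamma> z j) \<in> borel_measurable (PiM {1..Suc n} (\<lambda>_. P))"
    and "(\<lambda>z. Wt w n z) \<in> borel_measurable (PiM {1..Suc n} (\<lambda>_. P))"
    and "(\<lambda>z. Dv w s Lf n \<gamma> z) \<in> borel_measurable (PiM {1..Suc n} (\<lambda>_. P))"
    and "(\<lambda>z. ind w s Lf n \<gamma> z j) \<in> borel_measurable (PiM {1..Suc n} (\<lambda>_. P))"
    and "(\<lambda>z. w (fst (z j))) \<in> borel_measurable (PiM {1..Suc n} (\<lambda>_. P))"
    and "(\<lambda>z. Lf (fst (z j)) (snd (z j))) \<in> borel_measurable (PiM {1..Suc n} (\<lambda>_. P))"
proof -
  have [measurable]: "i \<in> {1..Suc n} \<Longrightarrow> (\<lambda>z. w (fst (z i))) \<in> borel_measurable (PiM {1..Suc n} (\<lambda>_. P))" for i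
    by measurable
  have sm[measurable]: "i \<in> {1..Suc n} \<Longrightarrow> (\<lambda>z. s (fst (z i))) \<in> borel_measurable (PiM {1..Suc n} (\<lambda>_. P))" for i
    by measurable
  have [measurable]: "i \<in> {1..Suc n} \<Longrightarrow> (\<lambda>z. Lf (fst (z i)) (snd (z i))) \<in> borel_measurable (PiM {1..Suc n} (\<lambda>_. P))" for i
    by measurable
  have [measurable]: "(\<lambda>z. Wt w n z) \<in> borel_measurable (PiM {1..Suc n} (\<lambda>_. P))"
    unfolding Wt_def by measurable
  have [measurable]: "j \<in> {1..Suc n} \<Longrightarrow> (\<lambda>z. Fv w s Lf n z (s (fst (z j)))) \<in> borel_measurable (PiM {1..Suc n} (\<lambda>_. P))" for j
    unfolding Fv_def by measurable
  have [measurable]: "i \<in> {1..Suc n} \<Longrightarrow> j \<in> {1..Suc n} \<Longrightarrow> Measurable.pred (PiM {1..Suc n} (\<lambda>_. P)) (\<lambda>x. s (fst (x i)) \<le> s (fst (x j)))" for i j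
    unfolding pred_def by (rule borel_measurable_le[OF sm sm])
  have [measurable]: "i \<in> {1..Suc n} \<Longrightarrow> (\<lambda>z. ind w s Lf n \<gamma> z i) \<in> borel_measurable (PiM {1..Suc n} (\<lambda>_. P))" for i
    unfolding ind_def good_def by measurable
  have [measurable]: "(\<lambda>z. Dv w s Lf n \<gamma> z) \<in> borel_measurable (PiM {1..Suc n} (\<lambda>_. P))"
    unfolding Dv_def by measurable
  show "(\<lambda>z. hv w s Lf n \<gamma> z j) \<in> borel_measurable (PiM {1..Suc n} (\<lambda>_. P))"
    unfolding hv_def using j by measurable
  show "(\<lambda>z. Wt w n z) \<in> borel_measurable (PiM {1..Suc n} (\<lambda>_. P))" by measurable
  show "(\<lambda>z. Dv w s Lf n \<gamma> z) \<in> borel_measurable (PiM {1..Suc n} (\<lambda>_. P))" by measurable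
  show "(\<lambda>z. ind w s Lf n \<gamma> z j) \<in> borel_measurable (PiM {1..Suc n} (\<lambda>_. P))" using j by measurable
  show "(\<lambda>z. w (fst (z j))) \<in> borel_measurable (PiM {1..Suc n} (\<lambda>_. P))" using j by measurable
  show "(\<lambda>z. Lf (fst (z j)) (snd (z j))) \<in> borel_measurable (PiM {1..Suc n} (\<lambda>_. P))" using j by measurable
qed


lemma perm_facts:
  fixes \<sigma> :: "nat \<Rightarrow> nat"
  assumes bij: "bij_betw \<sigma> {1..Suc n} {1..Suc n}"
    and zz: "\<And>i. i \<in> {1..Suc n} \<Longrightarrow> z' i = z (\<sigma> i)"
    and i: "i \<in> {1..Suc n}"
  shows "hv w s Lf n \<gamma> z' i = hv w s Lf n \<gamma> z (\<sigma> i)"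
proof -
  let ?I = "{1..Suc n}"
  have sum_eq: "(\<Sum>i\<in>?I. \<phi> (z' i)) = (\<Sum>i\<in>?I. \<phi> (z i))" for \<phi> :: "_ \<Rightarrow> real"
  proof -
    have "(\<Sum>i\<in>?I. \<phi> (z' i)) = (\<Sum>i\<in>?I. \<phi> (z (\<sigma> i)))" using zz by (intro sum.cong) auto
    also have "\<dots> = (\<Sum>i\<in>?I. \<phi> (z i))" using sum.reindex_bij_betw[OF bij, of "\<lambda>k. \<phi> (z k)"] .
    finally show ?thesis .
  qed
  have ex_eq: "(\<exists>j\<in>?I. \<phi> (z' j)) = (\<exists>j\<in>?I. \<phi> (z j))" for \<phi>
  proof -
    have "(\<exists>j\<in>?I. \<phi> (z' j)) = (\<exists>j\<in>?I. \<phi> (z (\<sigma> j)))" using zz by auto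
    also have "\<dots> = (\<exists>j\<in>\<sigma> ` ?I. \<phi> (z j))" by auto
    also have "\<sigma> ` ?I = ?I" using bij by (simp add: bij_betw_def)
    finally show ?thesis .
  qed
  have W: "Wt w n z' = Wt w n z" unfolding Wt_def by (rule sum_eq)
  have F: "Fv w s Lf n z' t = Fv w s Lf n z t" for t
    unfolding Fv_def W using sum_eq[of "\<lambda>p. w (fst p) * Lf (fst p) (snd p) * (if s (fst p) \<le> t then 1 else 0)"]
    by simp
  have G: "good w s Lf n \<gamma> z' k = good w s Lf n \<gamma> z (\<sigma> k)" if k: "k \<in> ?I" for k
    unfolding good_def F zz[OF k]
    using ex_eq[of "\<lambda>p. Fv w s Lf n z (s (fst p)) \<le> \<gamma> \<and> s (fst (z (\<sigma> k))) \<le> s (fst p)"] by simp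
  have Ind: "ind w s Lf n \<gamma> z' k = ind w s Lf n \<gamma> z (\<sigma> k)" if k: "k \<in> ?I" for k
    unfolding ind_def G[OF k] ..
  have D: "Dv w s Lf n \<gamma> z' = Dv w s Lf n \<gamma> z"
  proof -
    have "Dv w s Lf n \<gamma> z' = (\<Sum>k\<in>?I. (\<lambda>k. w (fst (z k)) * Lf (fst (z k)) (snd (z k)) * ind w s Lf n \<gamma> z k) (\<sigma> k))"
      unfolding Dv_def using zz Ind by (intro sum.cong) auto
    also have "\<dots> = Dv w s Lf n \<gamma> z"
      unfolding Dv_def by (rule sum.reindex_bij_betw[OF bij])
    finally show ?thesis .
  qed
  show ?thesis unfolding hv_def W D Ind[OF i] zz[OF i] ..
qed

lemma sum_hv_le:
  assumes w0: "\<And>x. 0 \<le> w x" and L0: "\<And>x y. 0 \<le> Lf x y"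
  shows "(\<Sum>j\<in>{1..Suc n}. hv w s Lf n \<gamma> z j) \<le> Wt w n z"
proof -
  have "(\<Sum>j\<in>{1..Suc n}. hv w s Lf n \<gamma> z j) = Dv w s Lf n \<gamma> z * Wt w n z / Dv w s Lf n \<gamma> z"
    unfolding hv_def Dv_def by (simp add: sum_divide_distrib[symmetric] sum_distrib_right[symmetric])
  also have "\<dots> \<le> Wt w n z"
  proof -
    have W0: "0 \<le> Wt w n z" unfolding Wt_def by (rule sum_nonneg) (use w0 in auto)
    then show ?thesis by (cases "Dv w s Lf n \<gamma> z = 0") auto
  qed
  finally show ?thesis .
qed

lemma Wt_nonneg: "(\<And>x. 0 \<le> w x) \<Longrightarrow> 0 \<le> Wt w n z"
  unfolding Wt_def by (rule sum_nonneg) auto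

lemma Dv_nonneg: "(\<And>x. 0 \<le> w x) \<Longrightarrow> (\<And>x y. 0 \<le> Lf x y \<and> Lf x y \<le> 1) \<Longrightarrow> 0 \<le> Dv w s Lf n \<gamma> z"
  unfolding Dv_def by (rule sum_nonneg) (auto intro!: mult_nonneg_nonneg simp: ind_def)

lemma hv_nonneg: "(\<And>x. 0 \<le> w x) \<Longrightarrow> (\<And>x y. 0 \<le> Lf x y \<and> Lf x y \<le> 1) \<Longrightarrow> 0 \<le> hv w s Lf n \<gamma> z j"
  unfolding hv_def using Wt_nonneg[of w n z] Dv_nonneg[of w Lf s n \<gamma> z]
  by (auto intro!: mult_nonneg_nonneg divide_nonneg_nonneg simp: ind_def)


theorem theorem6p1:
  fixes P Q :: "('x \<times> 'y) measure"
    and w :: "'x \<Rightarrow> real" and s :: "'x \<Rightarrow> real" and Lf :: "'x \<Rightarrow> 'y \<Rightarrow> real"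
    and n :: nat and \<gamma> :: real
  assumes "prob_space P"
    and "prob_space Q"
    and "(\<lambda>z. w (fst z)) \<in> borel_measurable P"
    and "\<And>x. 0 \<le> w x"
    and "Q = density P (\<lambda>z. ennreal (w (fst z)))"
    and "(\<lambda>z. s (fst z)) \<in> borel_measurable P"
    and "(\<lambda>z. Lf (fst z) (snd z)) \<in> borel_measurable P"
    and "\<And>x y. 0 \<le> Lf x y \<and> Lf x y \<le> 1"
    and "0 < \<gamma>" and "\<gamma> < 1"
  shows "(\<integral>\<^sup>+ z. ennreal (Lf (fst (z (n+1))) (snd (z (n+1))))
                 * e2ennreal (evalue_data w s Lf n \<gamma> z)
            \<partial>(\<Pi>\<^sub>M i\<in>{1..n+1}. (if i = n+1 then Q else P))) \<le> 1"
proof -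
  note P = assms(1) and Q = assms(2) and wm = assms(3) and w0 = assms(4) and Qd = assms(5)
    and sm = assms(6) and Lm = assms(7) and L01 = assms(8)
  let ?I = "{1..Suc n}"
  define MP where "MP = PiM ?I (\<lambda>_. P)"
  define MQ where "MQ = PiM ?I (\<lambda>i. if i = Suc n then Q else P)"
  define G where "G z = ennreal (Lf (fst (z (Suc n))) (snd (z (Suc n)))) *
       (if w (fst (z (Suc n))) = 0 then \<infinity> else ennreal (ind w s Lf n \<gamma> z (Suc n) * Wt w n z / Dv w s Lf n \<gamma> z))" for z
  define h where "h j z = ennreal (hv w s Lf n \<gamma> z j)" for j z
  have sucI: "Suc n \<in> ?I" by simp
  have mf1: "\<And>j. j \<in> ?I \<Longrightarrow> (\<lambda>z. hv w s Lf n \<gamma> z j) \<in> borel_measurable MP"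
    and mf2: "(\<lambda>z. Wt w n z) \<in> borel_measurable MP"
    and mf3: "(\<lambda>z. Dv w s Lf n \<gamma> z) \<in> borel_measurable MP"
    and mf4: "\<And>j. j \<in> ?I \<Longrightarrow> (\<lambda>z. ind w s Lf n \<gamma> z j) \<in> borel_measurable MP"
    and mf5: "\<And>j. j \<in> ?I \<Longrightarrow> (\<lambda>z. w (fst (z j))) \<in> borel_measurable MP"
    and mf6: "\<And>j. j \<in> ?I \<Longrightarrow> (\<lambda>z. Lf (fst (z j)) (snd (z j))) \<in> borel_measurable MP"
    unfolding MP_def using hv_meas[OF wm sm Lm] hv_meas[OF wm sm Lm sucI] by blast+
  have Gm: "G \<in> borel_measurable MP"
    unfolding G_def using mf4[OF sucI] mf5[OF sucI] mf6[OF sucI] mf2 mf3 by measurable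
  have hm: "j \<in> ?I \<Longrightarrow> h j \<in> borel_measurable MP" for j
    unfolding h_def using mf1 by measurable
  have gm: "(\<lambda>y. ennreal (w (fst y))) \<in> borel_measurable P" using wm by measurable
  have MQd: "MQ = density MP (\<lambda>z. ennreal (w (fst (z (Suc n)))))"
    unfolding MQ_def MP_def using PiM_last_density[OF P Q gm Qd] by simp
  have step1: "(\<integral>\<^sup>+ z. ennreal (Lf (fst (z (n+1))) (snd (z (n+1)))) * e2ennreal (evalue_data w s Lf n \<gamma> z) \<partial>MQ)
      \<le> (\<integral>\<^sup>+ z. G z \<partial>MQ)"
  proof (rule nn_integral_mono)
    fix z
    show "ennreal (Lf (fst (z (n+1))) (snd (z (n+1)))) * e2ennreal (evalue_data w s Lf n \<gamma> z) \<le> G z"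
      using pointwise_bound[where w=w and Lf=Lf and s=s and \<gamma>=\<gamma> and n=n and z=z, OF w0 L01]
      unfolding G_def Suc_eq_plus1 .
  qed
  have step2: "(\<integral>\<^sup>+ z. G z \<partial>MQ) = (\<integral>\<^sup>+ z. ennreal (w (fst (z (Suc n)))) * G z \<partial>MP)"
    unfolding MQd
    by (rule nn_integral_density) (use mf5[OF sucI] Gm in auto)
  have step3: "(\<integral>\<^sup>+ z. ennreal (w (fst (z (Suc n)))) * G z \<partial>MP) = (\<integral>\<^sup>+ z. h (Suc n) z \<partial>MP)"
  proof (rule nn_integral_cong)
    fix z
    show "ennreal (w (fst (z (Suc n)))) * G z = h (Suc n) z"
    proof (cases "w (fst (z (Suc n))) = 0")
      case True then show ?thesis by (simp add: G_def h_def hv_def)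
    next
      case False
      have i0: "0 \<le> ind w s Lf n \<gamma> z (Suc n)" by (simp add: ind_def)
      have W0: "0 \<le> Wt w n z" unfolding Wt_def by (rule sum_nonneg) (use w0 in auto)
      have D0: "0 \<le> Dv w s Lf n \<gamma> z" unfolding Dv_def
        by (rule sum_nonneg) (use w0 L01 in \<open>auto intro!: mult_nonneg_nonneg simp: ind_def\<close>)
      have "ennreal (w (fst (z (Suc n)))) * G z
          = ennreal (w (fst (z (Suc n)))) * (ennreal (Lf (fst (z (Suc n))) (snd (z (Suc n)))) *
              ennreal (ind w s Lf n \<gamma> z (Suc n) * Wt w n z / Dv w s Lf n \<gamma> z))"
        using False by (simp add: G_def)
      also have "\<dots> = ennreal (w (fst (z (Suc n))) * (Lf (fst (z (Suc n))) (snd (z (Suc n))) *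
              (ind w s Lf n \<gamma> z (Suc n) * Wt w n z / Dv w s Lf n \<gamma> z)))"
      proof -
        have a: "0 \<le> w (fst (z (Suc n)))" using w0 by simp
        have b: "0 \<le> Lf (fst (z (Suc n))) (snd (z (Suc n)))" using L01 by simp
        have c: "0 \<le> ind w s Lf n \<gamma> z (Suc n) * Wt w n z / Dv w s Lf n \<gamma> z"
          using i0 W0 D0 by simp
        have bc: "0 \<le> Lf (fst (z (Suc n))) (snd (z (Suc n))) * (ind w s Lf n \<gamma> z (Suc n) * Wt w n z / Dv w s Lf n \<gamma> z)"
          using b c by (rule mult_nonneg_nonneg)
        show ?thesis
          unfolding ennreal_mult[OF a bc] ennreal_mult[OF b c] ..
      qed
      also have "\<dots> = h (Suc n) z" unfolding h_def hv_def by (simp add: mult.assoc)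
      finally show ?thesis .
    qed
  qed
  have step4: "(\<integral>\<^sup>+ z. h (Suc n) z \<partial>MP) = (\<integral>\<^sup>+ z. h j z \<partial>MP)" if j: "j \<in> ?I" for j
  proof -
    define \<sigma> where "\<sigma> k = (if k = j then Suc n else if k = Suc n then j else k)" for k
    have \<sigma>I: "\<sigma> \<in> ?I \<rightarrow> ?I" using j by (auto simp: \<sigma>_def)
    have \<sigma>inv: "\<sigma> (\<sigma> k) = k" for k by (auto simp: \<sigma>_def)
    have inj: "inj_on \<sigma> ?I" unfolding inj_on_def by (metis \<sigma>inv)
    have bij: "bij_betw \<sigma> ?I ?I"
      by (rule bij_betw_byWitness[where f'=\<sigma>]) (use \<sigma>inv \<sigma>I in auto)
    define t where "t \<omega> = (\<lambda>k\<in>?I. \<omega> (\<sigma> k))" for \<omega> :: "nat \<Rightarrow> 'x \<times> 'y"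
    have tm: "t \<in> MP \<rightarrow>\<^sub>M MP"
      unfolding t_def MP_def
    proof (rule measurable_restrict)
      fix k assume "k \<in> ?I"
      then have "\<sigma> k \<in> ?I" using \<sigma>I by auto
      then show "(\<lambda>x. x (\<sigma> k)) \<in> PiM ?I (\<lambda>_. P) \<rightarrow>\<^sub>M P"
        using measurable_component_singleton[of "\<sigma> k" ?I "\<lambda>_. P"] by simp
    qed
    have dist: "distr MP MP t = MP"
      unfolding MP_def t_def
      using distr_PiM_reindex[of ?I "\<lambda>_. P" \<sigma> ?I] P inj \<sigma>I by simp
    have "(\<integral>\<^sup>+ z. h (Suc n) z \<partial>MP) = (\<integral>\<^sup>+ z. h (Suc n) z \<partial>distr MP MP t)"
      using dist by simp
    also have "\<dots> = (\<integral>\<^sup>+ z. h (Suc n) (t z) \<partial>MP)"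
      by (rule nn_integral_distr[OF tm]) (use hm[OF sucI] in simp)
    also have "\<dots> = (\<integral>\<^sup>+ z. h j z \<partial>MP)"
    proof (rule nn_integral_cong)
      fix z
      have "hv w s Lf n \<gamma> (t z) (Suc n) = hv w s Lf n \<gamma> z (\<sigma> (Suc n))"
        by (rule perm_facts[OF bij _ sucI]) (simp add: t_def)
      also have "\<sigma> (Suc n) = j" by (simp add: \<sigma>_def)
      finally show "h (Suc n) (t z) = h j z" by (simp add: h_def)
    qed
    finally show ?thesis .
  qed
  have step5: "(\<integral>\<^sup>+ z. (\<Sum>j\<in>?I. h j z) \<partial>MP) \<le> (\<integral>\<^sup>+ z. ennreal (Wt w n z) \<partial>MP)"
  proof (rule nn_integral_mono)
    fix z
    have hv0: "0 \<le> hv w s Lf n \<gamma> z j" for j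
      by (rule hv_nonneg) (use w0 L01 in auto)
    have "(\<Sum>j\<in>?I. h j z) = ennreal (\<Sum>j\<in>?I. hv w s Lf n \<gamma> z j)"
      unfolding h_def using hv0 by (rule sum_ennreal)
    also have "\<dots> \<le> ennreal (Wt w n z)"
      using sum_hv_le[where w=w and Lf=Lf and n=n and s=s and \<gamma>=\<gamma> and z=z] w0 L01 by (auto intro: ennreal_leI)
    finally show "(\<Sum>j\<in>?I. h j z) \<le> ennreal (Wt w n z)" .
  qed
  have step6: "(\<integral>\<^sup>+ z. ennreal (Wt w n z) \<partial>MP) = of_nat (Suc n)"
  proof -
    have one: "(\<integral>\<^sup>+ y. ennreal (w (fst y)) \<partial>P) = 1"
    proof -
      have "(\<integral>\<^sup>+ y. ennreal (w (fst y)) \<partial>P) = (\<integral>\<^sup>+ y. ennreal (w (fst y)) * 1 \<partial>P)" by simp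
      also have "\<dots> = (\<integral>\<^sup>+ y. 1 \<partial>Q)" unfolding Qd
        by (rule nn_integral_density[symmetric]) (use gm in auto)
      also have "\<dots> = 1" using prob_space.emeasure_space_1[OF Q] by simp
      finally show ?thesis .
    qed
    have comp: "(\<integral>\<^sup>+ z. ennreal (w (fst (z i))) \<partial>MP) = 1" if i: "i \<in> ?I" for i
    proof -
      have "(\<integral>\<^sup>+ z. ennreal (w (fst (z i))) \<partial>MP) = (\<integral>\<^sup>+ y. ennreal (w (fst y)) \<partial>distr MP P (\<lambda>\<omega>. \<omega> i))"
        by (rule nn_integral_distr[symmetric]) (use i gm in \<open>auto simp: MP_def\<close>)
      also have "distr MP P (\<lambda>\<omega>. \<omega> i) = P"
        unfolding MP_def using distr_PiM_component[of ?I "\<lambda>_. P" i] P i by simp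
      finally show ?thesis using one by simp
    qed
    have "(\<integral>\<^sup>+ z. ennreal (Wt w n z) \<partial>MP) = (\<integral>\<^sup>+ z. (\<Sum>i\<in>?I. ennreal (w (fst (z i)))) \<partial>MP)"
      unfolding Wt_def by (intro nn_integral_cong sum_ennreal[symmetric]) (use w0 in auto)
    also have "\<dots> = (\<Sum>i\<in>?I. (\<integral>\<^sup>+ z. ennreal (w (fst (z i))) \<partial>MP))"
      by (rule nn_integral_sum) (use mf5 in auto)
    also have "\<dots> = (\<Sum>i\<in>?I. 1)" using comp by simp
    finally show ?thesis by simp
  qed
  define X where "X = (\<integral>\<^sup>+ z. h (Suc n) z \<partial>MP)"
  have "of_nat (Suc n) * X = (\<Sum>j\<in>?I. X)" by simp
  also have "\<dots> = (\<Sum>j\<in>?I. (\<integral>\<^sup>+ z. h j z \<partial>MP))" unfolding X_def using step4 by simp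
  also have "\<dots> = (\<integral>\<^sup>+ z. (\<Sum>j\<in>?I. h j z) \<partial>MP)"
    by (rule nn_integral_sum[symmetric]) (use hm in auto)
  also have "\<dots> \<le> of_nat (Suc n)" using step5 step6 by simp
  finally have "of_nat (Suc n) * X \<le> of_nat (Suc n) * 1" by simp
  then have X1: "X \<le> 1"
    by (subst (asm) ennreal_mult_le_mult_iff) auto
  have "(\<integral>\<^sup>+ z. ennreal (Lf (fst (z (n+1))) (snd (z (n+1)))) * e2ennreal (evalue_data w s Lf n \<gamma> z) \<partial>MQ) \<le> 1"
    using step1 step2 step3 X1 unfolding X_def by simp
  then show ?thesis unfolding MQ_def by simp
qed

end
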